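(* Let $\mathcal Q_1,\dots,\mathcal Q_l\subseteq V$ be linear subspaces such that the linear spaces $\mathcal L_1,\dots,\mathcal L_l\subseteq\mathbb P(V^* )$ defined by $(\mathcal Q_1),\dots,(\mathcal Q_l)$ form a linearly joined sequence. Let $V'=\mathcal F_1\oplus\dots\oplus\mathcal F_l$ be a $K$-vector space, set $\tilde{\mathcal Q}_i=\mathcal Q_i\oplus\bigoplus_{j\neq i}\mathcal F_j\subseteq V\oplus V'$, and let $\tilde{\mathcal L}_i\subseteq\mathbb P((V\oplus V')^* )$ be the linear space defined by the ideal $(\tilde{\mathcal Q}_i)$ of $K[V\oplus V']$; identify $\mathcal L_i$ with the linear space defined by $(\mathcal Q_i)+(V')$ in $\mathbb P((V\oplus V')^* )$. Then: (1) the sequence $\tilde{\mathcal L}_1,\dots,\tilde{\mathcal L}_l$ is linearly joined, and for every $i=2,\dots,l$, $\tilde{\mathcal L}_i\cap(\tilde{\mathcal L}_1\cup\dots\cup\tilde{\mathcal L}_{i-1})=\mathcal L_i\cap(\mathcal L_1\cup\dots\cup\mathcal L_{i-1})$; (2) in $K[V\oplus V']$, $$\bigcap_{i=1}^l(\tilde{\mathcal Q}_i)=\Big(\bigcap_{i=1}^l(\mathcal Q_i)\Big)+\sum_{i=1}^l(\tilde{\mathcal Q}_i\times\mathcal F_i),$$ where $(\tilde{\mathcal Q}_i\times\mathcal F_i)$ is the ideal generated by all products $fg$ with $f\in\tilde{\mathcal Q}_i$, $g\in\mathcal F_i$.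
   Context: $K$ is a field, $V$ a finite-dimensional $K$-vector space, $S=K[V]$. For $Q$ a subset of a vector space $W$, $(Q)$ is the ideal of $K[W]$ generated by $Q$. A sequence $\mathcal L_1,\dots,\mathcal L_l$ of linear subspaces of a projective space is linearly joined if for every $i=1,\dots,l-1$, $\mathcal L_{i+1}\cap(\mathcal L_1\cup\dots\cup\mathcal L_i)=\mathcal L_{i+1}\cap\mathrm{span}(\mathcal L_1\cup\dots\cup\mathcal L_i)$, where $\mathrm{span}$ is the smallest linear subspace containing the set. *)

theory Defs
  imports "HOL-Library.Poly_Mapping"
begin

text \<open>Vectors of a finite-dimensional K-vector space W are coordinate functions
  'v \<Rightarrow> 'k (w.r.t. a basis indexed by the finite type 'v).  The same
  representation is used for points of the dual space W^*.\<close>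

definition lsubspace :: "('v \<Rightarrow> 'k::field) set \<Rightarrow> bool" where
  "lsubspace S \<longleftrightarrow> (\<lambda>_. 0) \<in> S \<and> (\<forall>x\<in>S. \<forall>y\<in>S. (\<lambda>v. x v + y v) \<in> S)
     \<and> (\<forall>c. \<forall>x\<in>S. (\<lambda>v. c * x v) \<in> S)"

definition lspan :: "('v \<Rightarrow> 'k::field) set \<Rightarrow> ('v \<Rightarrow> 'k) set" where
  "lspan A = \<Inter>{S. lsubspace S \<and> A \<subseteq> S}"

definition is_ideal :: "'r::comm_ring_1 set \<Rightarrow> bool" where
  "is_ideal I \<longleftrightarrow> 0 \<in> I \<and> (\<forall>x\<in>I. \<forall>y\<in>I. x + y \<in> I) \<and> (\<forall>r. \<forall>x\<in>I. r * x \<in> I)"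

definition ideal_gen :: "'r::comm_ring_1 set \<Rightarrow> 'r set" where
  "ideal_gen G = \<Inter>{I. is_ideal I \<and> G \<subseteq> I}"

text \<open>The polynomial ring K[W] = symmetric algebra on W, i.e. polynomials in the
  basis variables 'v; a vector of W is a linear form.\<close>

type_synonym ('v, 'k) mpoly = "('v \<Rightarrow>\<^sub>0 nat) \<Rightarrow>\<^sub>0 'k"

definition lpoly :: "('v::finite \<Rightarrow> 'k::field) \<Rightarrow> ('v, 'k) mpoly" where
  "lpoly c = (\<Sum>v\<in>UNIV. Poly_Mapping.single (Poly_Mapping.single v 1) (c v))"

definition peval :: "('v \<Rightarrow> 'k::field) \<Rightarrow> ('v, 'k) mpoly \<Rightarrow> 'k" where
  "peval p f = sum (\<lambda>m. Poly_Mapping.lookup f m * prod (\<lambda>v. p v ^ Poly_Mapping.lookup m v) (Poly_Mapping.keys m)) (Poly_Mapping.keys f)"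

text \<open>Affine cone in W^* of the projective linear space defined by an ideal.\<close>

definition zero_locus :: "('v, 'k::field) mpoly set \<Rightarrow> ('v \<Rightarrow> 'k) set" where
  "zero_locus I = {p. \<forall>f\<in>I. peval p f = 0}"

definition lin_space :: "('v::finite \<Rightarrow> 'k::field) set \<Rightarrow> ('v \<Rightarrow> 'k) set" where
  "lin_space Q = zero_locus (ideal_gen (lpoly ` Q))"

definition linearly_joined :: "(nat \<Rightarrow> ('v \<Rightarrow> 'k::field) set) \<Rightarrow> nat \<Rightarrow> bool" where
  "linearly_joined L l \<longleftrightarrow> (\<forall>i\<in>{1..<l}.
     L (Suc i) \<inter> (\<Union>j\<in>{1..i}. L j) = L (Suc i) \<inter> lspan (\<Union>j\<in>{1..i}. L j))"

definition extl :: "('a \<Rightarrow> 'k::zero) \<Rightarrow> ('a + 'b \<Rightarrow> 'k)" where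
  "extl c = case_sum c (\<lambda>_. 0)"

definition extr :: "('b \<Rightarrow> 'k::zero) \<Rightarrow> ('a + 'b \<Rightarrow> 'k)" where
  "extr d = case_sum (\<lambda>_. 0) d"

definition direct_sum_decomp :: "(nat \<Rightarrow> ('b \<Rightarrow> 'k::field) set) \<Rightarrow> nat \<Rightarrow> bool" where
  "direct_sum_decomp F l \<longleftrightarrow>
     (\<forall>j\<in>{1..l}. lsubspace (F j)) \<and>
     (\<forall>v. \<exists>f. (\<forall>j\<in>{1..l}. f j \<in> F j) \<and> v = (\<lambda>x. \<Sum>j\<in>{1..l}. f j x)) \<and>
     (\<forall>f. (\<forall>j\<in>{1..l}. f j \<in> F j) \<and> (\<lambda>x. \<Sum>j\<in>{1..l}. f j x) = (\<lambda>_. 0)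
          \<longrightarrow> (\<forall>j\<in>{1..l}. f j = (\<lambda>_. 0)))"

definition tildeQ :: "(nat \<Rightarrow> ('a \<Rightarrow> 'k::field) set) \<Rightarrow> (nat \<Rightarrow> ('b \<Rightarrow> 'k) set) \<Rightarrow> nat
    \<Rightarrow> nat \<Rightarrow> ('a + 'b \<Rightarrow> 'k) set" where
  "tildeQ Q F l i = lspan (extl ` Q i \<union> (\<Union>j\<in>{1..l} - {i}. extr ` F j))"

end

theory Submission imports Defs "HOL-Library.Function_Algebras" begin

definition mon :: "('v::finite \<Rightarrow> 'r::comm_ring_1) \<Rightarrow> ('v \<Rightarrow>\<^sub>0 nat) \<Rightarrow> 'r" where
  "mon \<phi> m = (\<Prod>v\<in>UNIV. \<phi> v ^ Poly_Mapping.lookup m v)"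

definition evg :: "('k::comm_ring_1 \<Rightarrow> 'r::comm_ring_1) \<Rightarrow> ('v::finite \<Rightarrow> 'r) \<Rightarrow> ('v,'k) mpoly \<Rightarrow> 'r" where
  "evg c \<phi> f = (\<Sum>m\<in>Poly_Mapping.keys f. c (Poly_Mapping.lookup f m) * mon \<phi> m)"

definition chom :: "('k::comm_ring_1 \<Rightarrow> 'r::comm_ring_1) \<Rightarrow> bool" where
  "chom c \<longleftrightarrow> c 0 = 0 \<and> c 1 = 1 \<and> (\<forall>a b. c (a + b) = c a + c b) \<and> (\<forall>a b. c (a * b) = c a * c b)"

lemma mon_add: "mon \<phi> (m + n) = mon \<phi> m * mon \<phi> n"
  by (simp add: mon_def lookup_add power_add prod.distrib)

lemma mon_zero[simp]: "mon \<phi> 0 = 1"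
  by (simp add: mon_def)

lemma evg_superset:
  assumes "chom c" "finite K" "Poly_Mapping.keys f \<subseteq> K"
  shows "evg c \<phi> f = (\<Sum>m\<in>K. c (Poly_Mapping.lookup f m) * mon \<phi> m)"
  unfolding evg_def
  by (rule sum.mono_neutral_left) (use assms in \<open>auto simp: chom_def in_keys_iff\<close>)

lemma evg_zero[simp]: "evg c \<phi> 0 = 0"
  by (simp add: evg_def)

lemma evg_add:
  assumes "chom c"
  shows "evg c \<phi> (f + g) = evg c \<phi> f + evg c \<phi> g"
proof -
  let ?K = "Poly_Mapping.keys f \<union> Poly_Mapping.keys g"
  have "evg c \<phi> (f + g) = (\<Sum>m\<in>?K. c (Poly_Mapping.lookup (f+g) m) * mon \<phi> m)"
    using assms keys_add[of f g] by (intro evg_superset) auto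
  also have "\<dots> = (\<Sum>m\<in>?K. c (Poly_Mapping.lookup f m) * mon \<phi> m) + (\<Sum>m\<in>?K. c (Poly_Mapping.lookup g m) * mon \<phi> m)"
    using assms by (simp add: lookup_add chom_def distrib_right sum.distrib)
  also have "\<dots> = evg c \<phi> f + evg c \<phi> g"
    using assms by (subst (1 2) evg_superset[where K = ?K]) auto
  finally show ?thesis .
qed

lemma evg_single:
  assumes "chom c"
  shows "evg c \<phi> (Poly_Mapping.single m a) = c a * mon \<phi> m"
  using assms by (auto simp: evg_def chom_def)

lemma evg_sum:
  assumes "chom c"
  shows "evg c \<phi> (\<Sum>i\<in>A. f i) = (\<Sum>i\<in>A. evg c \<phi> (f i))"
  by (induction A rule: infinite_finite_induct) (auto simp: evg_add[OF assms])

lemma poly_expand: "f = (\<Sum>m\<in>Poly_Mapping.keys f. Poly_Mapping.single m (Poly_Mapping.lookup f m))"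
  by (rule poly_mapping_eqI)
     (auto simp: lookup_sum lookup_single when_def in_keys_iff sum.delta)

lemma evg_mult:
  assumes "chom c"
  shows "evg c \<phi> (f * g) = evg c \<phi> f * evg c \<phi> g"
proof -
  have e: "f * g = (\<Sum>m\<in>Poly_Mapping.keys f. \<Sum>n\<in>Poly_Mapping.keys g.
       Poly_Mapping.single (m + n) (Poly_Mapping.lookup f m * Poly_Mapping.lookup g n))"
    apply (subst (1) poly_expand[of f], subst (1) poly_expand[of g])
    by (simp add: sum_product mult_single)
  have cm: "c (a * b) = c a * c b" for a b using assms by (simp add: chom_def)
  have "evg c \<phi> (f * g) = (\<Sum>m\<in>Poly_Mapping.keys f. \<Sum>n\<in>Poly_Mapping.keys g.
       (c (Poly_Mapping.lookup f m) * mon \<phi> m) * (c (Poly_Mapping.lookup g n) * mon \<phi> n))"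
    apply (subst e)
    apply (simp only: evg_sum[OF assms] evg_single[OF assms] mon_add cm)
    by (intro sum.cong refl) (simp only: mult_ac)
  also have "\<dots> = evg c \<phi> f * evg c \<phi> g"
    by (simp only: evg_def sum_product)
  finally show ?thesis .
qed

lemma evg_one:
  assumes "chom c" shows "evg c \<phi> (1::('v::finite,'k::comm_ring_1) mpoly) = 1"
proof -
  have "evg c \<phi> (Poly_Mapping.single 0 (1::'k)) = 1"
    by (simp only: evg_single[OF assms] mon_zero) (use assms in \<open>simp add: chom_def\<close>)
  then show ?thesis by simp
qed


definition Xv :: "'v \<Rightarrow> ('v,'k::comm_ring_1) mpoly" where
  "Xv v = Poly_Mapping.single (Poly_Mapping.single v 1) 1"

lemma Xv_pow: "Xv v ^ n = Poly_Mapping.single (Poly_Mapping.single v n) 1"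
  by (induction n) (auto simp: Xv_def mult_single single_add[symmetric])

lemma prod_single_mon:
  "(\<Prod>v\<in>A. Poly_Mapping.single (Poly_Mapping.single v (n v)) (1::'k::comm_ring_1))
     = Poly_Mapping.single (\<Sum>v\<in>A. Poly_Mapping.single v (n v)) 1"
  by (induction A rule: infinite_finite_induct) (auto simp: mult_single)

lemma mon_expand: "(\<Sum>v\<in>(UNIV::'v::finite set). Poly_Mapping.single v (Poly_Mapping.lookup m v)) = m"
  by (rule poly_mapping_eqI) (simp add: lookup_sum lookup_single when_def)

lemma single_mon_prod:
  "Poly_Mapping.single m (1::'k::comm_ring_1) = (\<Prod>v\<in>(UNIV::'v::finite set). Xv v ^ Poly_Mapping.lookup m v)"
  by (simp add: Xv_pow prod_single_mon mon_expand)

lemma poly_induct: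
  fixes P :: "('v::finite,'k::comm_ring_1) mpoly \<Rightarrow> bool"
  assumes c: "\<And>a. P (Poly_Mapping.single 0 a)" and x: "\<And>v. P (Xv v)"
    and a: "\<And>f g. P f \<Longrightarrow> P g \<Longrightarrow> P (f + g)" and m: "\<And>f g. P f \<Longrightarrow> P g \<Longrightarrow> P (f * g)"
  shows "P f"
proof -
  have one: "P 1" using c[of 1] by simp
  have pw: "P (g ^ n)" if "P g" for g n
    using that by (induction n) (auto intro: m one)
  have pr: "P (\<Prod>v\<in>A. h v)" if "\<And>v. P (h v)" for A and h :: "'v \<Rightarrow> ('v,'k) mpoly"
    using that by (induction A rule: infinite_finite_induct) (auto intro: m one)
  have sm: "P (Poly_Mapping.single mm b)" for mm b
  proof -
    have "Poly_Mapping.single mm b = Poly_Mapping.single 0 b * Poly_Mapping.single mm 1"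
      by (simp add: mult_single)
    also have "P \<dots>" unfolding single_mon_prod by (intro m c pr pw x)
    finally show ?thesis .
  qed
  have zero: "P 0" using c[of 0] by simp
  have sms: "P (\<Sum>i\<in>A. h i)" if "\<And>i. P (h i)" for A and h :: "('v \<Rightarrow>\<^sub>0 nat) \<Rightarrow> ('v,'k) mpoly"
    using that by (induction A rule: infinite_finite_induct) (auto intro: a zero)
  show ?thesis by (subst poly_expand) (intro sms sm)
qed

lemma chom_single0: "chom (Poly_Mapping.single 0 :: 'k \<Rightarrow> ('v,'k::comm_ring_1) mpoly)"
  by (simp add: chom_def single_add mult_single)

lemma chom_id: "chom (\<lambda>x::'k::comm_ring_1. x)"
  by (simp add: chom_def)

lemma mon_single: "mon \<phi> (Poly_Mapping.single v 1) = \<phi> v"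
proof -
  have "mon \<phi> (Poly_Mapping.single v 1) = (\<Prod>u\<in>UNIV. if u = v then \<phi> v else 1)"
    unfolding mon_def by (intro prod.cong refl) (auto simp: lookup_single when_def)
  also have "\<dots> = \<phi> v" by (simp add: prod.delta)
  finally show ?thesis .
qed

lemma evg_Xv: assumes "chom c" shows "evg c \<phi> (Xv v) = \<phi> v"
  unfolding Xv_def by (simp only: evg_single[OF assms] mon_single) (use assms in \<open>simp add: chom_def\<close>)

lemma evg_const: "chom c \<Longrightarrow> evg c \<phi> (Poly_Mapping.single 0 a) = c a"
  by (simp add: evg_single)

lemma evg_diff: "chom c \<Longrightarrow> evg c \<phi> (f - g) = evg c \<phi> f - evg c \<phi> g"
  by (metis evg_add add_diff_cancel eq_diff_eq)

definition ev :: "'v \<Rightarrow> 'v \<Rightarrow> 'k::field" where "ev v = (\<lambda>u. if u = v then 1 else 0)"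

lemma lpoly_alt: "lpoly c = (\<Sum>v\<in>UNIV. Poly_Mapping.single 0 (c v) * Xv v)"
  unfolding lpoly_def Xv_def by (simp add: mult_single)

lemma lpoly_add: "lpoly (x + y) = lpoly x + lpoly y"
  by (simp add: lpoly_def single_add sum.distrib)

lemma lpoly_diff: "lpoly (x - y) = lpoly x - lpoly y"
  by (simp add: lpoly_def single_diff sum_subtractf)

lemma lpoly_zero: "lpoly 0 = 0"
  by (simp add: lpoly_def)

lemma lpoly_zero': "lpoly (\<lambda>_. 0) = 0"
  by (simp add: lpoly_def)

lemma lpoly_add': "lpoly (\<lambda>v. x v + y v) = lpoly x + lpoly y"
  by (simp add: lpoly_def single_add sum.distrib)

lemma lpoly_diff': "lpoly (\<lambda>v. x v - y v) = lpoly x - lpoly y"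
  by (simp add: lpoly_def single_diff sum_subtractf)

lemma lpoly_scale: "lpoly (\<lambda>v. a * x v) = Poly_Mapping.single 0 a * lpoly x"
  by (simp add: lpoly_def sum_distrib_left mult_single)

lemma lpoly_sum: "lpoly (\<Sum>i\<in>A. x i) = (\<Sum>i\<in>A. lpoly (x i))"
  by (induction A rule: infinite_finite_induct) (auto simp: lpoly_zero' lpoly_add')

lemma lpoly_ev: "lpoly (ev v) = Xv v"
proof -
  have "lpoly (ev v) = (\<Sum>u\<in>UNIV. if u = v then Xv v else 0)"
    unfolding lpoly_alt by (intro sum.cong refl) (auto simp: ev_def)
  then show ?thesis by simp
qed

lemma evg_lpoly: "chom c \<Longrightarrow> evg c \<phi> (lpoly x) = (\<Sum>v\<in>UNIV. c (x v) * \<phi> v)"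
  by (simp add: lpoly_alt evg_sum evg_mult evg_const evg_Xv)


lemma ideal_gen_ideal: "is_ideal (ideal_gen G)"
  unfolding is_ideal_def ideal_gen_def by auto

lemma ideal_gen_sub: "G \<subseteq> ideal_gen G"
  unfolding ideal_gen_def by auto

lemma ideal_gen_least: "is_ideal I \<Longrightarrow> G \<subseteq> I \<Longrightarrow> ideal_gen G \<subseteq> I"
  unfolding ideal_gen_def by auto

lemma ideal_gen_mono: "G \<subseteq> H \<Longrightarrow> ideal_gen G \<subseteq> ideal_gen H"
  by (rule ideal_gen_least[OF ideal_gen_ideal]) (use ideal_gen_sub in blast)

lemma ideal_0: "is_ideal I \<Longrightarrow> 0 \<in> I" by (simp add: is_ideal_def)
lemma ideal_add: "is_ideal I \<Longrightarrow> x \<in> I \<Longrightarrow> y \<in> I \<Longrightarrow> x + y \<in> I" by (simp add: is_ideal_def)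
lemma ideal_multl: "is_ideal I \<Longrightarrow> x \<in> I \<Longrightarrow> r * x \<in> I" by (simp add: is_ideal_def)
lemma ideal_multr: "is_ideal I \<Longrightarrow> x \<in> I \<Longrightarrow> x * r \<in> I"
  by (subst mult.commute) (rule ideal_multl)
lemma ideal_diff: "is_ideal I \<Longrightarrow> x \<in> I \<Longrightarrow> y \<in> I \<Longrightarrow> x - y \<in> I"
proof -
  assume a: "is_ideal I" "x \<in> I" "y \<in> I"
  have "x + (-1) * y \<in> I" by (intro ideal_add ideal_multl a)
  then show ?thesis by simp
qed

lemma is_idealI:
  assumes "0 \<in> I" "\<And>x y. x \<in> I \<Longrightarrow> y \<in> I \<Longrightarrow> x + y \<in> I" "\<And>r x. x \<in> I \<Longrightarrow> r * x \<in> I"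
  shows "is_ideal I"
  using assms unfolding is_ideal_def by blast

lemma ideal_left_quot: "is_ideal I \<Longrightarrow> is_ideal {y. a * y \<in> I}"
proof (rule is_idealI)
  assume I: "is_ideal I"
  show "0 \<in> {y. a * y \<in> I}" using ideal_0[OF I] by simp
  fix x y r
  assume "x \<in> {y. a * y \<in> I}" "y \<in> {y. a * y \<in> I}"
  then have "a * x + a * y \<in> I" using ideal_add[OF I] by blast
  then show "x + y \<in> {y. a * y \<in> I}" by (simp add: distrib_left)
next
  fix r x
  assume I: "is_ideal I" and "x \<in> {y. a * y \<in> I}"
  then have "r * (a * x) \<in> I" using ideal_multl[OF I] by blast
  then show "r * x \<in> {y. a * y \<in> I}" by (simp add: mult.left_commute)
qed

lemma ideal_right_quot: "is_ideal I \<Longrightarrow> is_ideal {x. \<forall>y\<in>Y. x * y \<in> I}"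
proof (rule is_idealI)
  assume I: "is_ideal I"
  show "0 \<in> {x. \<forall>y\<in>Y. x * y \<in> I}" using ideal_0[OF I] by simp
  fix x z
  assume "x \<in> {x. \<forall>y\<in>Y. x * y \<in> I}" "z \<in> {x. \<forall>y\<in>Y. x * y \<in> I}"
  then show "x + z \<in> {x. \<forall>y\<in>Y. x * y \<in> I}"
    using ideal_add[OF I] by (simp add: distrib_right)
next
  fix r x
  assume I: "is_ideal I" and "x \<in> {x. \<forall>y\<in>Y. x * y \<in> I}"
  then show "r * x \<in> {x. \<forall>y\<in>Y. x * y \<in> I}"
    using ideal_multl[OF I] by (simp add: mult.assoc)
qed

lemma ideal_gen_prod:
  assumes "x \<in> ideal_gen A" "y \<in> ideal_gen B"
  shows "x * y \<in> ideal_gen {a * b | a b. a \<in> A \<and> b \<in> B}"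
proof -
  define P where "P = ideal_gen {a * b | a b. a \<in> A \<and> b \<in> B}"
  have P: "is_ideal P" unfolding P_def by (rule ideal_gen_ideal)
  have gen: "a * b \<in> P" if "a \<in> A" "b \<in> B" for a b
  proof -
    have "a * b \<in> {a * b | a b. a \<in> A \<and> b \<in> B}" using that by blast
    then show ?thesis unfolding P_def using ideal_gen_sub by (rule subsetD[rotated])
  qed
  have 1: "a * y \<in> P" if a: "a \<in> A" and y: "y \<in> ideal_gen B" for a y
  proof -
    have "ideal_gen B \<subseteq> {y. a * y \<in> P}"
      by (rule ideal_gen_least[OF ideal_left_quot[OF P]]) (auto intro: gen[OF a])
    then show ?thesis using y by (rule subsetD[THEN CollectD])
  qed
  have "ideal_gen A \<subseteq> {x. \<forall>y\<in>ideal_gen B. x * y \<in> P}"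
    by (rule ideal_gen_least[OF ideal_right_quot[OF P]]) (auto intro: 1)
  then have "x \<in> {x. \<forall>y\<in>ideal_gen B. x * y \<in> P}" using assms(1) by (rule subsetD)
  then show ?thesis using assms(2) unfolding P_def by simp
qed

lemma ideal_gen_hom:
  assumes "\<And>x y. h (x + y) = h x + h y" "\<And>x y. h (x * y) = h x * h y" "h 0 = 0"
    and "x \<in> ideal_gen G"
  shows "h x \<in> ideal_gen (h ` G)"
proof -
  have I: "is_ideal (ideal_gen (h ` G))" by (rule ideal_gen_ideal)
  have "ideal_gen G \<subseteq> {x. h x \<in> ideal_gen (h ` G)}"
  proof (rule ideal_gen_least)
    show "is_ideal {x. h x \<in> ideal_gen (h ` G)}"
      by (rule is_idealI) (auto simp: assms(1-3) intro: ideal_0[OF I] ideal_add[OF I] ideal_multl[OF I])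
    show "G \<subseteq> {x. h x \<in> ideal_gen (h ` G)}" using ideal_gen_sub by blast
  qed
  then show ?thesis using assms(4) by blast
qed

lemma lspan_sub: "lsubspace (lspan A)"
  unfolding lsubspace_def lspan_def by auto

lemma lspan_sup: "A \<subseteq> lspan A"
  unfolding lspan_def by auto

lemma lspan_least: "lsubspace S \<Longrightarrow> A \<subseteq> S \<Longrightarrow> lspan A \<subseteq> S"
  unfolding lspan_def by auto

lemma lsub_0: "lsubspace S \<Longrightarrow> (\<lambda>_. 0) \<in> S" by (simp add: lsubspace_def)
lemma lsub_add: "lsubspace S \<Longrightarrow> x \<in> S \<Longrightarrow> y \<in> S \<Longrightarrow> (\<lambda>v. x v + y v) \<in> S" by (simp add: lsubspace_def)
lemma lsub_scale: "lsubspace S \<Longrightarrow> x \<in> S \<Longrightarrow> (\<lambda>v. c * x v) \<in> S" by (simp add: lsubspace_def)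
lemma lsub_diff: "lsubspace S \<Longrightarrow> x \<in> S \<Longrightarrow> y \<in> S \<Longrightarrow> (\<lambda>v. x v - y v) \<in> S"
  using lsub_add[of S x "\<lambda>v. (-1) * y v"] lsub_scale[of S y "-1"] by simp

lemma lpoly_lspan: "lpoly ` lspan G \<subseteq> ideal_gen (lpoly ` G)"
proof -
  have "lspan G \<subseteq> {w. lpoly w \<in> ideal_gen (lpoly ` G)}"
  proof (rule lspan_least)
    show "lsubspace {w. lpoly w \<in> ideal_gen (lpoly ` G)}"
      unfolding lsubspace_def
      using ideal_gen_ideal[of "lpoly ` G"]
      by (auto simp: lpoly_zero' lpoly_add' lpoly_scale ideal_add ideal_multl ideal_0)
    show "G \<subseteq> {w. lpoly w \<in> ideal_gen (lpoly ` G)}" using ideal_gen_sub by blast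
  qed
  then show ?thesis by blast
qed

lemma ideal_gen_lspan: "ideal_gen (lpoly ` lspan G) = ideal_gen (lpoly ` G)"
proof
  show "ideal_gen (lpoly ` lspan G) \<subseteq> ideal_gen (lpoly ` G)"
    by (rule ideal_gen_least[OF ideal_gen_ideal lpoly_lspan])
  show "ideal_gen (lpoly ` G) \<subseteq> ideal_gen (lpoly ` lspan G)"
    by (rule ideal_gen_mono) (use lspan_sup in blast)
qed

definition lin :: "(('v \<Rightarrow> 'k::field) \<Rightarrow> ('v \<Rightarrow> 'k)) \<Rightarrow> bool" where
  "lin A \<longleftrightarrow> (\<forall>x y. A (\<lambda>v. x v + y v) = (\<lambda>v. A x v + A y v)) \<and> (\<forall>c x. A (\<lambda>v. c * x v) = (\<lambda>v. c * A x v))"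

definition subst :: "(('v::finite \<Rightarrow> 'k::field) \<Rightarrow> ('v \<Rightarrow> 'k)) \<Rightarrow> ('v,'k) mpoly \<Rightarrow> ('v,'k) mpoly" where
  "subst A f = evg (Poly_Mapping.single 0) (\<lambda>v. lpoly (A (ev v))) f"

lemma subst_add: "subst A (f + g) = subst A f + subst A g"
  by (simp add: subst_def evg_add chom_single0)
lemma subst_mult: "subst A (f * g) = subst A f * subst A g"
  by (simp add: subst_def evg_mult chom_single0)
lemma subst_diff: "subst A (f - g) = subst A f - subst A g"
  by (simp add: subst_def evg_diff chom_single0)
lemma subst_zero: "subst A 0 = 0"
  by (simp add: subst_def)
lemma subst_const: "subst A (Poly_Mapping.single 0 a) = Poly_Mapping.single 0 a"
  by (simp add: subst_def evg_const chom_single0)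
lemma subst_Xv: "subst A (Xv v) = lpoly (A (ev v))"
  by (simp add: subst_def evg_Xv chom_single0)

lemma lin_addD: "lin A \<Longrightarrow> A (\<lambda>v. x v + y v) = (\<lambda>v. A x v + A y v)"
  unfolding lin_def by simp

lemma lin_scaleD: "lin A \<Longrightarrow> A (\<lambda>v. c * x v) = (\<lambda>v. c * A x v)"
  unfolding lin_def by simp

lemma lin_zero: "lin A \<Longrightarrow> A (\<lambda>_. 0) = (\<lambda>_. 0)"
  using lin_scaleD[of A 0 "\<lambda>_. 0"] by simp

lemma lin_sum: "lin A \<Longrightarrow> A (\<lambda>u. \<Sum>i\<in>S. x i u) = (\<lambda>u. \<Sum>i\<in>S. A (x i) u)"
proof (induction S rule: infinite_finite_induct)
  case (infinite S) then show ?case by (simp add: lin_zero)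
next
  case empty then show ?case by (simp add: lin_zero)
next
  case (insert a S)
  have "A (\<lambda>u. \<Sum>i\<in>insert a S. x i u) = A (\<lambda>u. x a u + (\<Sum>i\<in>S. x i u))"
    using insert by simp
  also have "\<dots> = (\<lambda>u. A (x a) u + A (\<lambda>u. \<Sum>i\<in>S. x i u) u)"
    by (rule lin_addD[OF insert(4)])
  finally show ?case using insert by simp
qed

lemma vec_expand: "(x::'v::finite \<Rightarrow> 'k::field) = (\<lambda>u. \<Sum>v\<in>UNIV. x v * ev v u)"
proof
  fix u
  have "(\<Sum>v\<in>UNIV. x v * ev v u) = (\<Sum>v\<in>UNIV. if v = u then x v else 0)"
    by (rule sum.cong) (auto simp: ev_def)
  then show "x u = (\<Sum>v\<in>UNIV. x v * ev v u)" by simp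
qed

lemma sum_fun_apply: "(\<Sum>i\<in>A. f i) x = (\<Sum>i\<in>A. f i x)"
  by (induction A rule: infinite_finite_induct) auto

lemma subst_lpoly:
  assumes "lin A" shows "subst A (lpoly x) = lpoly (A x)"
proof -
  have "subst A (lpoly x) = (\<Sum>v\<in>UNIV. Poly_Mapping.single 0 (x v) * lpoly (A (ev v)))"
    by (simp add: subst_def evg_lpoly chom_single0)
  also have "\<dots> = (\<Sum>v\<in>UNIV. lpoly (\<lambda>u. x v * A (ev v) u))"
    by (simp add: lpoly_scale)
  also have "\<dots> = lpoly (\<Sum>v\<in>UNIV. (\<lambda>u. x v * A (ev v) u))"
    by (simp add: lpoly_sum)
  also have "(\<Sum>v\<in>UNIV. (\<lambda>u. x v * A (ev v) u)) = (\<lambda>u. \<Sum>v\<in>UNIV. x v * A (ev v) u)"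
    by (auto simp: fun_eq_iff sum_fun_apply)
  also have "\<dots> = (\<lambda>u. \<Sum>v\<in>UNIV. A (\<lambda>u. x v * ev v u) u)"
    using lin_scaleD[OF assms] by simp
  also have "\<dots> = A (\<lambda>u. \<Sum>v\<in>UNIV. x v * ev v u)"
    by (rule lin_sum[OF assms, symmetric])
  also have "\<dots> = A x" by (simp flip: vec_expand)
  finally show ?thesis .
qed

lemma subst_id: "subst (\<lambda>w. w) f = f"
  by (induction f rule: poly_induct) (auto simp: subst_add subst_mult subst_const subst_Xv lpoly_ev)

lemma subst_ideal:
  assumes "lin A" "\<And>g. g \<in> G \<Longrightarrow> A g \<in> G'" "x \<in> ideal_gen (lpoly ` G)"
  shows "subst A x \<in> ideal_gen (lpoly ` G')"
proof -
  have "subst A x \<in> ideal_gen (subst A ` lpoly ` G)"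
    by (rule ideal_gen_hom) (auto simp: subst_add subst_mult subst_zero assms(3))
  also have "subst A ` lpoly ` G \<subseteq> lpoly ` G'"
    using assms(1,2) by (auto simp: subst_lpoly)
  then have "ideal_gen (subst A ` lpoly ` G) \<subseteq> ideal_gen (lpoly ` G')" by (rule ideal_gen_mono)
  finally show ?thesis .
qed

lemma subst_key:
  assumes "\<And>w. (\<lambda>v. A w v - B w v) \<in> D"
  shows "subst A f - subst B f \<in> ideal_gen (lpoly ` D)"
proof (induction f rule: poly_induct)
  case (1 a) then show ?case by (simp add: subst_const ideal_0 ideal_gen_ideal)
next
  case (2 v)
  have "lpoly (\<lambda>u. A (ev v) u - B (ev v) u) \<in> ideal_gen (lpoly ` D)"
    using assms ideal_gen_sub by blast
  then show ?case by (simp add: subst_Xv lpoly_diff')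
next
  case (3 f g)
  have "subst A (f + g) - subst B (f + g) = (subst A f - subst B f) + (subst A g - subst B g)"
    by (simp add: subst_add)
  then show ?case using 3 by (simp add: ideal_add ideal_gen_ideal)
next
  case (4 f g)
  have "subst A (f * g) - subst B (f * g) = subst A f * (subst A g - subst B g) + (subst A f - subst B f) * subst B g"
    by (simp add: subst_mult algebra_simps)
  then show ?case using 4 by (simp add: ideal_add ideal_multl ideal_multr ideal_gen_ideal)
qed


definition ip :: "('v::finite \<Rightarrow> 'k::field) \<Rightarrow> ('v \<Rightarrow> 'k) \<Rightarrow> 'k" where
  "ip p g = (\<Sum>v\<in>UNIV. g v * p v)"

lemma peval_evg: "peval p f = evg (\<lambda>x. x) p f"
  unfolding peval_def evg_def mon_def
proof (intro sum.cong refl arg_cong2[where f = "(*)"])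
  fix m
  show "(\<Prod>v\<in>Poly_Mapping.keys m. p v ^ Poly_Mapping.lookup m v) = (\<Prod>v\<in>UNIV. p v ^ Poly_Mapping.lookup m v)"
    by (rule prod.mono_neutral_left) (auto simp: in_keys_iff)
qed

lemma peval_lpoly: "peval p (lpoly g) = ip p g"
  by (simp add: peval_evg evg_lpoly chom_id ip_def)

lemma lin_space_char: "lin_space G = {p. \<forall>g\<in>G. ip p g = 0}"
proof
  show "lin_space G \<subseteq> {p. \<forall>g\<in>G. ip p g = 0}"
    unfolding lin_space_def zero_locus_def
    using ideal_gen_sub[of "lpoly ` G"] by (auto simp flip: peval_lpoly)
  show "{p. \<forall>g\<in>G. ip p g = 0} \<subseteq> lin_space G"
  proof
    fix p assume p: "p \<in> {p. \<forall>g\<in>G. ip p g = 0}"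
    have "ideal_gen (lpoly ` G) \<subseteq> {f. peval p f = 0}"
    proof (rule ideal_gen_least)
      show "is_ideal {f. peval p f = 0}"
        by (rule is_idealI) (auto simp: peval_evg evg_add evg_mult chom_id)
      show "lpoly ` G \<subseteq> {f. peval p f = 0}" using p by (auto simp: peval_lpoly)
    qed
    then show "p \<in> lin_space G" unfolding lin_space_def zero_locus_def by blast
  qed
qed

lemma ip_add: "ip p (\<lambda>v. x v + y v) = ip p x + ip p y"
  by (simp add: ip_def distrib_right sum.distrib)
lemma ip_scale: "ip p (\<lambda>v. c * x v) = c * ip p x"
  by (simp add: ip_def sum_distrib_left mult.assoc)
lemma ip_zero: "ip p (\<lambda>_. 0) = 0"
  by (simp add: ip_def)
lemma ip_addp: "ip (\<lambda>v. p v + q v) x = ip p x + ip q x"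
  by (simp add: ip_def distrib_left sum.distrib)
lemma ip_scalep: "ip (\<lambda>v. c * p v) x = c * ip p x"
  by (simp add: ip_def sum_distrib_left mult.left_commute)
lemma ip_zerop: "ip (\<lambda>_. 0) x = 0"
  by (simp add: ip_def)
lemma ip_sum: "ip p (\<lambda>v. \<Sum>j\<in>A. x j v) = (\<Sum>j\<in>A. ip p (x j))"
  by (induction A rule: infinite_finite_induct) (auto simp: ip_zero ip_add)
lemma ip_ev: "ip p (ev u) = p u"
proof -
  have "ip p (ev u) = (\<Sum>v\<in>UNIV. if v = u then p v else 0)"
    unfolding ip_def by (rule sum.cong) (auto simp: ev_def)
  then show ?thesis by simp
qed

lemma lin_space_lspan: "lin_space (lspan G) = lin_space G"
proof -
  have "(\<forall>g\<in>lspan G. ip p g = 0) \<longleftrightarrow> (\<forall>g\<in>G. ip p g = 0)" for p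
  proof
    assume "\<forall>g\<in>G. ip p g = 0"
    then have "lspan G \<subseteq> {g. ip p g = 0}"
      by (intro lspan_least) (auto simp: lsubspace_def ip_add ip_scale ip_zero)
    then show "\<forall>g\<in>lspan G. ip p g = 0" by blast
  qed (use lspan_sup in blast)
  then show ?thesis by (simp add: lin_space_char)
qed

lemma sum_UNIV_sum:
  "(\<Sum>x\<in>(UNIV::('a::finite + 'b::finite) set). f x) = (\<Sum>a\<in>UNIV. f (Inl a)) + (\<Sum>b\<in>UNIV. f (Inr b))"
proof -
  have "(\<Sum>x\<in>(UNIV::('a + 'b) set). f x) = (\<Sum>x\<in>Inl ` UNIV. f x) + (\<Sum>x\<in>Inr ` UNIV. f x)"
    by (subst UNIV_sum, rule sum.union_disjoint) auto
  also have "\<dots> = (\<Sum>a\<in>UNIV. f (Inl a)) + (\<Sum>b\<in>UNIV. f (Inr b))"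
    by (simp add: sum.reindex)
  finally show ?thesis .
qed

lemma ip_extl: "ip (p :: 'a::finite + 'b::finite \<Rightarrow> 'k::field) (extl q) = ip (\<lambda>a. p (Inl a)) q"
  by (simp add: ip_def sum_UNIV_sum extl_def)
lemma ip_extr: "ip (p :: 'a::finite + 'b::finite \<Rightarrow> 'k::field) (extr d) = ip (\<lambda>b. p (Inr b)) d"
  by (simp add: ip_def sum_UNIV_sum extr_def)

lemma TL_char:
  "lin_space (tildeQ Q F l i) = {p. (\<lambda>a. p (Inl a)) \<in> lin_space (Q i) \<and>
      (\<forall>j\<in>{1..l}-{i}. \<forall>d\<in>F j. ip (\<lambda>b. p (Inr b)) d = 0)}"
proof -
  have "(\<forall>g\<in>extl ` Q i \<union> (\<Union>j\<in>{1..l} - {i}. extr ` F j). ip p g = 0) \<longleftrightarrow>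
    (\<forall>q\<in>Q i. ip p (extl q) = 0) \<and> (\<forall>j\<in>{1..l}-{i}. \<forall>d\<in>F j. ip p (extr d) = 0)" for p
    by blast
  then show ?thesis
    unfolding tildeQ_def lin_space_lspan unfolding lin_space_char by (simp add: ip_extl ip_extr)
qed

lemma LL_char:
  fixes Q :: "nat \<Rightarrow> ('a::finite \<Rightarrow> 'k::field) set"
  shows "lin_space (extl ` Q i \<union> range extr) = {p. (\<lambda>a. p (Inl a)) \<in> lin_space (Q i) \<and> (\<lambda>b. p (Inr b)) = (\<lambda>_. 0)}"
proof -
  have "(\<forall>d. ip r d = 0) \<longleftrightarrow> r = (\<lambda>_. 0)" for r :: "'b::finite \<Rightarrow> 'k::field"
  proof
    assume "\<forall>d. ip r d = 0" then show "r = (\<lambda>_. 0)" by (metis ip_ev)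
  qed (simp add: ip_zerop)
  have "(\<forall>g\<in>extl ` Q i \<union> range extr. ip p g = 0) \<longleftrightarrow>
    (\<forall>q\<in>Q i. ip p (extl q) = 0) \<and> (\<forall>d. ip p (extr d) = 0)" for p :: "'a + 'b::finite \<Rightarrow> 'k"
    by blast
  then show ?thesis
    unfolding lin_space_char by (simp add: ip_extl ip_extr \<open>\<And>r. (\<forall>d. ip r d = 0) \<longleftrightarrow> r = (\<lambda>_. 0)\<close>)
qed

lemma perp_all:
  assumes DS: "direct_sum_decomp F l" and h: "\<forall>j\<in>{1..l}. \<forall>d\<in>F j. ip r d = 0"
  shows "r = (\<lambda>_. 0)"
proof
  fix b
  obtain f where f: "\<forall>j\<in>{1..l}. f j \<in> F j" "ev b = (\<lambda>x. \<Sum>j\<in>{1..l}. f j x)"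
    using DS unfolding direct_sum_decomp_def by blast
  have "r b = ip r (ev b)" by (simp add: ip_ev)
  also have "\<dots> = (\<Sum>j\<in>{1..l}. ip r (f j))" by (subst f(2)) (simp add: ip_sum)
  also have "\<dots> = 0" using f(1) h by simp
  finally show "r b = 0" .
qed


lemma part2:
  fixes Q :: "nat \<Rightarrow> ('a::finite \<Rightarrow> 'k::field) set"
    and F :: "nat \<Rightarrow> ('b::finite \<Rightarrow> 'k) set"
  assumes DS: "direct_sum_decomp F l" and i: "i \<in> {2..l}"
  shows "lin_space (tildeQ Q F l i) \<inter> (\<Union>j\<in>{1..<i}. lin_space (tildeQ Q F l j))
       = lin_space (extl ` Q i \<union> range extr)
           \<inter> (\<Union>j\<in>{1..<i}. lin_space (extl ` Q j \<union> range extr))"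
proof
  show "lin_space (extl ` Q i \<union> range extr) \<inter> (\<Union>j\<in>{1..<i}. lin_space (extl ` Q j \<union> range extr))
    \<subseteq> lin_space (tildeQ Q F l i) \<inter> (\<Union>j\<in>{1..<i}. lin_space (tildeQ Q F l j))"
    unfolding TL_char LL_char by (auto simp: ip_zerop)
next
  show "lin_space (tildeQ Q F l i) \<inter> (\<Union>j\<in>{1..<i}. lin_space (tildeQ Q F l j))
     \<subseteq> lin_space (extl ` Q i \<union> range extr) \<inter> (\<Union>j\<in>{1..<i}. lin_space (extl ` Q j \<union> range extr))"
  proof
    fix p assume p: "p \<in> lin_space (tildeQ Q F l i) \<inter> (\<Union>j\<in>{1..<i}. lin_space (tildeQ Q F l j))"
    then obtain j where j: "j \<in> {1..<i}" and pj: "p \<in> lin_space (tildeQ Q F l j)" by blast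
    have pi: "p \<in> lin_space (tildeQ Q F l i)" using p by blast
    have "(\<lambda>b. p (Inr b)) = (\<lambda>_. 0)"
    proof (rule perp_all[OF DS], intro ballI)
      fix k d assume k: "k \<in> {1..l}" and d: "d \<in> F k"
      show "ip (\<lambda>b. p (Inr b)) d = 0"
      proof (cases "k = i")
        case True
        then have "k \<in> {1..l} - {j}" using j k by auto
        then show ?thesis using pj d unfolding TL_char by blast
      next
        case False
        then have "k \<in> {1..l} - {i}" using k by auto
        then show ?thesis using pi d unfolding TL_char by blast
      qed
    qed
    then show "p \<in> lin_space (extl ` Q i \<union> range extr) \<inter> (\<Union>j\<in>{1..<i}. lin_space (extl ` Q j \<union> range extr))"
      using pi pj j unfolding TL_char LL_char by blast
  qed
qed

lemma part1:
  fixes Q :: "nat \<Rightarrow> ('a::finite \<Rightarrow> 'k::field) set"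
    and F :: "nat \<Rightarrow> ('b::finite \<Rightarrow> 'k) set"
  assumes LJ: "linearly_joined (\<lambda>i. lin_space (Q i)) l" and DS: "direct_sum_decomp F l"
  shows "linearly_joined (\<lambda>i. lin_space (tildeQ Q F l i)) l"
  unfolding linearly_joined_def
proof (intro ballI)
  fix i assume i: "i \<in> {1..<l}"
  let ?T = "\<lambda>j. lin_space (tildeQ Q F l j)"
  have LJi: "lin_space (Q (Suc i)) \<inter> (\<Union>j\<in>{1..i}. lin_space (Q j))
     = lin_space (Q (Suc i)) \<inter> lspan (\<Union>j\<in>{1..i}. lin_space (Q j))"
    using LJ i unfolding linearly_joined_def by blast
  have "?T (Suc i) \<inter> lspan (\<Union>j\<in>{1..i}. ?T j) \<subseteq> ?T (Suc i) \<inter> (\<Union>j\<in>{1..i}. ?T j)"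
  proof
    fix p assume p: "p \<in> ?T (Suc i) \<inter> lspan (\<Union>j\<in>{1..i}. ?T j)"
    define S where "S = {q. (\<lambda>a. q (Inl a)) \<in> lspan (\<Union>j\<in>{1..i}. lin_space (Q j))
        \<and> (\<forall>d\<in>F (Suc i). ip (\<lambda>b. q (Inr b)) d = 0)}"
    let ?L = "lspan (\<Union>j\<in>{1..i}. lin_space (Q j))"
    have "lsubspace S"
      unfolding lsubspace_def
    proof (intro conjI ballI allI)
      show "(\<lambda>_. 0) \<in> S" unfolding S_def using lsub_0[OF lspan_sub] by (simp add: ip_zerop)
    next
      fix x y assume x: "x \<in> S" and y: "y \<in> S"
      have "(\<lambda>a. x (Inl a) + y (Inl a)) \<in> ?L"
        using x y unfolding S_def by (intro lsub_add[OF lspan_sub]) auto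
      then show "(\<lambda>v. x v + y v) \<in> S" using x y unfolding S_def by (simp add: ip_addp)
    next
      fix c x assume x: "x \<in> S"
      have "(\<lambda>a. c * x (Inl a)) \<in> ?L"
        using x unfolding S_def by (intro lsub_scale[OF lspan_sub]) auto
      then show "(\<lambda>v. c * x v) \<in> S" using x unfolding S_def by (simp add: ip_scalep)
    qed
    moreover have "(\<Union>j\<in>{1..i}. ?T j) \<subseteq> S"
    proof
      fix q assume "q \<in> (\<Union>j\<in>{1..i}. ?T j)"
      then obtain j where j: "j \<in> {1..i}" and q: "q \<in> ?T j" by blast
      have "Suc i \<in> {1..l} - {j}" using i j by auto
      then have 1: "\<forall>d\<in>F (Suc i). ip (\<lambda>b. q (Inr b)) d = 0" using q unfolding TL_char by blast
      have qj: "(\<lambda>a. q (Inl a)) \<in> lin_space (Q j)" using q unfolding TL_char by blast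
      have "(\<lambda>a. q (Inl a)) \<in> lspan (\<Union>j\<in>{1..i}. lin_space (Q j))"
        by (rule subsetD[OF lspan_sup]) (use j qj in blast)
      then show "q \<in> S" using 1 unfolding S_def by blast
    qed
    ultimately have "lspan (\<Union>j\<in>{1..i}. ?T j) \<subseteq> S" by (rule lspan_least)
    then have pS: "p \<in> S" using p by blast
    have pT: "p \<in> ?T (Suc i)" using p by blast
    have pr: "(\<lambda>b. p (Inr b)) = (\<lambda>_. 0)"
    proof (rule perp_all[OF DS], intro ballI)
      fix k d assume k: "k \<in> {1..l}" and d: "d \<in> F k"
      show "ip (\<lambda>b. p (Inr b)) d = 0"
      proof (cases "k = Suc i")
        case True
        then show ?thesis using pS d unfolding S_def by blast
      next
        case False
        then have "k \<in> {1..l} - {Suc i}" using k by auto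
        then show ?thesis using pT d unfolding TL_char by blast
      qed
    qed
    have "(\<lambda>a. p (Inl a)) \<in> lin_space (Q (Suc i)) \<inter> lspan (\<Union>j\<in>{1..i}. lin_space (Q j))"
      using pS pT unfolding S_def TL_char by blast
    then have "(\<lambda>a. p (Inl a)) \<in> (\<Union>j\<in>{1..i}. lin_space (Q j))" using LJi by blast
    then obtain j where j: "j \<in> {1..i}" and pl: "(\<lambda>a. p (Inl a)) \<in> lin_space (Q j)" by blast
    have "p \<in> ?T j" unfolding TL_char using pl pr by (simp add: ip_zerop)
    then show "p \<in> ?T (Suc i) \<inter> (\<Union>j\<in>{1..i}. ?T j)" using pT j by blast
  qed
  moreover have "?T (Suc i) \<inter> (\<Union>j\<in>{1..i}. ?T j) \<subseteq> ?T (Suc i) \<inter> lspan (\<Union>j\<in>{1..i}. ?T j)"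
    by (intro Int_mono subset_refl lspan_sup)
  ultimately show "?T (Suc i) \<inter> (\<Union>j\<in>{1..i}. ?T j) = ?T (Suc i) \<inter> lspan (\<Union>j\<in>{1..i}. ?T j)"
    by blast
qed


lemma extl_simps[simp]: "extl q (Inl a) = q a" "extl q (Inr b) = 0"
  by (simp_all add: extl_def)
lemma extr_simps[simp]: "extr d (Inr b) = d b" "extr d (Inl a) = 0"
  by (simp_all add: extr_def)

definition dcomp :: "(nat \<Rightarrow> ('b \<Rightarrow> 'k::field) set) \<Rightarrow> nat \<Rightarrow> ('b \<Rightarrow> 'k) \<Rightarrow> nat \<Rightarrow> ('b \<Rightarrow> 'k)" where
  "dcomp F l v = (SOME f. (\<forall>j\<in>{1..l}. f j \<in> F j) \<and> v = (\<lambda>x. \<Sum>j\<in>{1..l}. f j x))"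

context
  fixes F :: "nat \<Rightarrow> ('b::finite \<Rightarrow> 'k::field) set" and l :: nat
  assumes DS: "direct_sum_decomp F l"
begin

lemma Fsub: "j \<in> {1..l} \<Longrightarrow> lsubspace (F j)"
  using DS unfolding direct_sum_decomp_def by blast

lemma comp_props: "(\<forall>j\<in>{1..l}. dcomp F l v j \<in> F j) \<and> v = (\<lambda>x. \<Sum>j\<in>{1..l}. dcomp F l v j x)"
proof -
  have "\<exists>f. (\<forall>j\<in>{1..l}. f j \<in> F j) \<and> v = (\<lambda>x. \<Sum>j\<in>{1..l}. f j x)"
    using DS unfolding direct_sum_decomp_def by blast
  then show ?thesis unfolding dcomp_def by (rule someI_ex)
qed

lemma comp_in: "j \<in> {1..l} \<Longrightarrow> dcomp F l v j \<in> F j"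
  using comp_props by blast

lemma comp_unique:
  assumes g: "\<forall>j\<in>{1..l}. g j \<in> F j" and v: "v = (\<lambda>x. \<Sum>j\<in>{1..l}. g j x)" and j: "j \<in> {1..l}"
  shows "dcomp F l v j = g j"
proof -
  define h where "h j = (\<lambda>x. dcomp F l v j x - g j x)" for j
  have h1: "\<forall>j\<in>{1..l}. h j \<in> F j"
    unfolding h_def using g comp_in Fsub lsub_diff by blast
  have "(\<lambda>x. \<Sum>j\<in>{1..l}. h j x) = (\<lambda>x. (\<Sum>j\<in>{1..l}. dcomp F l v j x) - (\<Sum>j\<in>{1..l}. g j x))"
    unfolding h_def by (simp add: sum_subtractf)
  also have "\<dots> = (\<lambda>x. v x - v x)"
    using comp_props[of v] v by (metis (no_types, lifting))
  finally have "(\<lambda>x. \<Sum>j\<in>{1..l}. h j x) = (\<lambda>_. 0)" by simp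
  then have "h j = (\<lambda>_. 0)" using DS h1 j unfolding direct_sum_decomp_def by blast
  then show ?thesis unfolding h_def by (simp add: fun_eq_iff)
qed

lemma comp_add: "j \<in> {1..l} \<Longrightarrow> dcomp F l (\<lambda>x. v x + w x) j = (\<lambda>x. dcomp F l v j x + dcomp F l w j x)"
proof (rule comp_unique)
  show "\<forall>j\<in>{1..l}. (\<lambda>x. dcomp F l v j x + dcomp F l w j x) \<in> F j"
    using comp_in Fsub lsub_add by blast
  have "v = (\<lambda>x. \<Sum>j\<in>{1..l}. dcomp F l v j x)" "w = (\<lambda>x. \<Sum>j\<in>{1..l}. dcomp F l w j x)"
    using comp_props by blast+
  then show "(\<lambda>x. v x + w x) = (\<lambda>x. \<Sum>j\<in>{1..l}. dcomp F l v j x + dcomp F l w j x)"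
    by (simp add: sum.distrib fun_eq_iff)
qed

lemma comp_scale: "j \<in> {1..l} \<Longrightarrow> dcomp F l (\<lambda>x. c * v x) j = (\<lambda>x. c * dcomp F l v j x)"
proof (rule comp_unique)
  show "\<forall>j\<in>{1..l}. (\<lambda>x. c * dcomp F l v j x) \<in> F j"
    using comp_in Fsub lsub_scale by blast
  have "v = (\<lambda>x. \<Sum>j\<in>{1..l}. dcomp F l v j x)"
    using comp_props by blast
  then show "(\<lambda>x. c * v x) = (\<lambda>x. \<Sum>j\<in>{1..l}. c * dcomp F l v j x)"
    by (simp add: sum_distrib_left fun_eq_iff)
qed

lemma comp_F:
  assumes i: "i \<in> {1..l}" and b: "b \<in> F i" and j: "j \<in> {1..l}"
  shows "dcomp F l b j = (if j = i then b else (\<lambda>_. 0))"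
proof (rule comp_unique[OF _ _ j])
  show "\<forall>j\<in>{1..l}. (if j = i then b else (\<lambda>_. 0)) \<in> F j"
    using b by (auto intro!: lsub_0 Fsub)
  have "(\<Sum>j\<in>{1..l}. (if j = i then b else (\<lambda>_. 0)) x) = (\<Sum>j\<in>{1..l}. if j = i then b x else 0)" for x
    by (rule sum.cong) auto
  then show "b = (\<lambda>x. \<Sum>j\<in>{1..l}. (if j = i then b else (\<lambda>_. 0)) x)"
    using i by (simp add: fun_eq_iff)
qed

lemma comp_zero: "j \<in> {1..l} \<Longrightarrow> dcomp F l (\<lambda>_. 0) j = (\<lambda>_. 0)"
  using comp_scale[of j 0 "\<lambda>_. 0"] by simp

definition tau :: "nat \<Rightarrow> ('a + 'b \<Rightarrow> 'k) \<Rightarrow> ('a + 'b \<Rightarrow> 'k)" where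
  "tau k w = (\<lambda>z. w z - (\<Sum>j\<in>{1..k}. extr (dcomp F l (\<lambda>b. w (Inr b)) j) z))"

lemma tau_lin: "k \<le> l \<Longrightarrow> lin (tau k)"
  unfolding lin_def
proof (intro conjI allI)
  assume k: "k \<le> l"
  fix x y :: "'a + 'b \<Rightarrow> 'k"
  have S: "(\<Sum>j\<in>{1..k}. extr (dcomp F l (\<lambda>b. x (Inr b) + y (Inr b)) j) z)
      = (\<Sum>j\<in>{1..k}. extr (dcomp F l (\<lambda>b. x (Inr b)) j) z) + (\<Sum>j\<in>{1..k}. extr (dcomp F l (\<lambda>b. y (Inr b)) j) z)" for z
    using k by (cases z) (auto simp: comp_add sum.distrib intro!: sum.cong)
  show "tau k (\<lambda>v. x v + y v) = (\<lambda>v. tau k x v + tau k y v)"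
    unfolding tau_def S by (simp add: fun_eq_iff algebra_simps)
next
  assume k: "k \<le> l"
  fix c and x :: "'a + 'b \<Rightarrow> 'k"
  have S: "(\<Sum>j\<in>{1..k}. extr (dcomp F l (\<lambda>b. c * x (Inr b)) j) z)
      = c * (\<Sum>j\<in>{1..k}. extr (dcomp F l (\<lambda>b. x (Inr b)) j) z)" for z
    using k by (cases z) (auto simp: comp_scale sum_distrib_left intro!: sum.cong)
  show "tau k (\<lambda>v. c * x v) = (\<lambda>v. c * tau k x v)"
    unfolding tau_def S by (simp add: fun_eq_iff algebra_simps)
qed

lemma tau_0: "tau 0 w = w"
  by (simp add: tau_def)

lemma tau_Suc: "(\<lambda>v. tau k w v - tau (Suc k) w v) = extr (dcomp F l (\<lambda>b. w (Inr b)) (Suc k))"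
  by (simp add: tau_def fun_eq_iff atLeastAtMostSuc_conv sum.insert)

lemma tau_l: "tau l w = extl (\<lambda>a. w (Inl a))"
proof
  fix z
  show "tau l w z = extl (\<lambda>a. w (Inl a)) z"
  proof (cases z)
    case (Inl a) then show ?thesis by (simp add: tau_def)
  next
    case (Inr b)
    have "(\<Sum>j\<in>{1..l}. dcomp F l (\<lambda>b. w (Inr b)) j b) = w (Inr b)"
      using comp_props[of "\<lambda>b. w (Inr b)"] by (metis (no_types, lifting))
    then show ?thesis using Inr by (simp add: tau_def)
  qed
qed

lemma lin_preimage:
  assumes "lin A" "lsubspace S" shows "lsubspace {t. A t \<in> S}"
  unfolding lsubspace_def
  using assms by (simp add: lin_zero lin_addD lin_scaleD lsub_0 lsub_add lsub_scale)

lemma tau_extl: "k \<le> l \<Longrightarrow> tau k (extl (q :: 'a \<Rightarrow> 'k)) = extl q"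
proof -
  assume k: "k \<le> l"
  have "(\<lambda>b. extl q (Inr b)) = (\<lambda>_. 0)" by simp
  moreover have "(\<Sum>j\<in>{1..k}. extr (dcomp F l (\<lambda>_. 0) j) z) = 0" for z :: "'a + 'b"
    using k by (intro sum.neutral) (auto simp: comp_zero extr_def)
  ultimately show ?thesis unfolding tau_def by simp
qed

lemma tau_extr:
  assumes k: "k \<le> l" and i: "i \<in> {1..l}" and b: "b \<in> F i"
  shows "tau k (extr b :: 'a + 'b \<Rightarrow> 'k) = (if i \<le> k then (\<lambda>_. 0) else extr b)"
proof -
  have bb: "(\<lambda>c. extr b (Inr c)) = b" by simp
  have "(\<Sum>j\<in>{1..k}. extr (dcomp F l b j) z) = (\<Sum>j\<in>{1..k}. if j = i then extr b z else 0)" for z :: "'a + 'b"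
    using k i b by (intro sum.cong refl) (auto simp: comp_F extr_def)
  also have "\<dots> z = (if i \<in> {1..k} then extr b z else 0)" for z :: "'a + 'b"
    by (simp add: sum.delta')
  finally show ?thesis
    unfolding tau_def bb using i by (auto simp: fun_eq_iff)
qed

lemma tau_pres:
  assumes k: "k \<le> l" and t: "t \<in> tildeQ Q F l i"
  shows "tau k t \<in> tildeQ Q F l i"
proof -
  let ?G = "extl ` Q i \<union> (\<Union>j\<in>{1..l} - {i}. extr ` F j)"
  have "lspan ?G \<subseteq> {t. tau k t \<in> lspan ?G}"
  proof (rule lspan_least)
    show "lsubspace {t. tau k t \<in> lspan ?G}"
      by (rule lin_preimage[OF tau_lin[OF k] lspan_sub])
    show "?G \<subseteq> {t. tau k t \<in> lspan ?G}"
    proof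
      fix g assume g: "g \<in> ?G"
      show "g \<in> {t. tau k t \<in> lspan ?G}"
      proof (cases "g \<in> extl ` Q i")
        case True
        then show ?thesis using k lspan_sup[of ?G] by (auto simp: tau_extl)
      next
        case False
        then obtain j b where j: "j \<in> {1..l} - {i}" and b: "b \<in> F j" and gb: "g = extr b"
          using g by blast
        have "g \<in> lspan ?G" by (rule subsetD[OF lspan_sup g])
        have jl: "j \<in> {1..l}" using j by auto
        have te: "tau k g = (if j \<le> k then (\<lambda>_. 0) else g)" unfolding gb by (rule tau_extr[OF k jl b])
        show ?thesis using \<open>g \<in> lspan ?G\<close> lsub_0[OF lspan_sub[of ?G]] by (simp add: te)
      qed
    qed
  qed
  then show ?thesis using t unfolding tildeQ_def by blast
qed

lemma comp_zero_tQ: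
  assumes k: "k \<in> {1..l}" and t: "t \<in> tildeQ Q F l k"
  shows "dcomp F l (\<lambda>b. t (Inr b)) k = (\<lambda>_. 0)"
proof -
  let ?G = "extl ` Q k \<union> (\<Union>j\<in>{1..l} - {k}. extr ` F j)"
  have "lspan ?G \<subseteq> {t. dcomp F l (\<lambda>b. t (Inr b)) k = (\<lambda>_. 0)}"
  proof (rule lspan_least)
    show "lsubspace {t. dcomp F l (\<lambda>b. t (Inr b)) k = (\<lambda>_. 0)}"
      unfolding lsubspace_def using k by (simp add: comp_zero comp_add comp_scale)
    show "?G \<subseteq> {t. dcomp F l (\<lambda>b. t (Inr b)) k = (\<lambda>_. 0)}"
    proof
      fix g assume g: "g \<in> ?G"
      show "g \<in> {t. dcomp F l (\<lambda>b. t (Inr b)) k = (\<lambda>_. 0)}"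
      proof (cases "g \<in> extl ` Q k")
        case True
        then show ?thesis using k by (auto simp: comp_zero)
      next
        case False
        then obtain j b where j: "j \<in> {1..l} - {k}" and b: "b \<in> F j" and gb: "g = extr b"
          using g by blast
        have "(\<lambda>c. extr b (Inr c)) = b" by simp
        then show ?thesis using gb j k comp_F[OF _ b k] by auto
      qed
    qed
  qed
  then show ?thesis using t unfolding tildeQ_def by blast
qed

lemma tau_l_img:
  assumes Qi: "lsubspace (Q i)" and t: "t \<in> tildeQ Q F l i"
  shows "tau l t \<in> extl ` Q i"
proof -
  let ?G = "extl ` Q i \<union> (\<Union>j\<in>{1..l} - {i}. extr ` F j)"
  have "lspan ?G \<subseteq> {t. (\<lambda>a. t (Inl a)) \<in> Q i}"
  proof (rule lspan_least)
    show "lsubspace {t. (\<lambda>a. t (Inl a)) \<in> Q i}"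
      unfolding lsubspace_def using Qi by (simp add: lsub_0 lsub_add lsub_scale)
    show "?G \<subseteq> {t. (\<lambda>a. t (Inl a)) \<in> Q i}"
      using lsub_0[OF Qi] by (auto simp: extl_def extr_def)
  qed
  then have "(\<lambda>a. t (Inl a)) \<in> Q i" using t unfolding tildeQ_def by blast
  then show ?thesis unfolding tau_l by blast
qed

lemma extr_zero: "extr (\<lambda>_. 0) = (\<lambda>_. 0)"
  by (simp add: fun_eq_iff extr_def split: sum.split)

lemma step:
  fixes Q :: "nat \<Rightarrow> ('a::finite \<Rightarrow> 'k) set"
  assumes K: "Suc k \<le> l" and h: "h \<in> ideal_gen (lpoly ` tildeQ Q F l (Suc k))"
  shows "subst (tau k) h - subst (tau (Suc k)) h
     \<in> ideal_gen {f * g | f g. f \<in> lpoly ` tildeQ Q F l (Suc k) \<and> g \<in> lpoly ` extr ` F (Suc k)}"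
proof -
  let ?I = "ideal_gen (lpoly ` tildeQ Q F l (Suc k))"
  let ?P = "ideal_gen {f * g | f g. f \<in> lpoly ` tildeQ Q F l (Suc k) \<and> g \<in> lpoly ` extr ` F (Suc k)}"
  have linA: "lin (tau (Suc k) :: ('a + 'b \<Rightarrow> 'k) \<Rightarrow> _)" using K by (rule tau_lin)
  have linB: "lin (tau k :: ('a + 'b \<Rightarrow> 'k) \<Rightarrow> _)" using K by (intro tau_lin) simp
  have KK: "Suc k \<in> {1..l}" using K by auto
  have diffN: "subst (tau k) r - subst (tau (Suc k)) r \<in> ideal_gen (lpoly ` extr ` F (Suc k))"
    for r :: "('a + 'b, 'k) mpoly"
  proof (rule subst_key)
    fix w :: "'a + 'b \<Rightarrow> 'k"
    show "(\<lambda>v. tau k w v - tau (Suc k) w v) \<in> extr ` F (Suc k)"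
      unfolding tau_Suc using comp_in[OF KK] by blast
  qed
  have SAI: "subst (tau (Suc k)) x \<in> ?I" if "x \<in> ?I" for x
    by (rule subst_ideal[OF linA _ that]) (rule tau_pres[OF K])
  have PI: "is_ideal ?P" by (rule ideal_gen_ideal)
  have II: "is_ideal ?I" by (rule ideal_gen_ideal)
  define T where "T = {h. h \<in> ?I \<and> subst (tau k) h - subst (tau (Suc k)) h \<in> ?P}"
  have "is_ideal T"
  proof (rule is_idealI)
    show "0 \<in> T" unfolding T_def by (simp add: subst_zero ideal_0[OF PI] ideal_0[OF II])
  next
    fix x y assume x: "x \<in> T" and y: "y \<in> T"
    have e: "subst (tau k) (x + y) - subst (tau (Suc k)) (x + y)
      = (subst (tau k) x - subst (tau (Suc k)) x) + (subst (tau k) y - subst (tau (Suc k)) y)"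
      by (simp add: subst_add)
    have "subst (tau k) (x + y) - subst (tau (Suc k)) (x + y) \<in> ?P"
      unfolding e using x y unfolding T_def by (blast intro: ideal_add[OF PI])
    moreover have "x + y \<in> ?I" using x y unfolding T_def by (blast intro: ideal_add[OF II])
    ultimately show "x + y \<in> T" unfolding T_def by blast
  next
    fix r x assume x: "x \<in> T"
    have e: "subst (tau k) (r * x) - subst (tau (Suc k)) (r * x)
      = subst (tau k) r * (subst (tau k) x - subst (tau (Suc k)) x)
        + subst (tau (Suc k)) x * (subst (tau k) r - subst (tau (Suc k)) r)"
      by (simp add: subst_mult algebra_simps)
    have xI: "x \<in> ?I" and xP: "subst (tau k) x - subst (tau (Suc k)) x \<in> ?P" using x unfolding T_def by auto
    have 1: "subst (tau k) r * (subst (tau k) x - subst (tau (Suc k)) x) \<in> ?P"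
      by (rule ideal_multl[OF PI xP])
    have 2: "subst (tau (Suc k)) x * (subst (tau k) r - subst (tau (Suc k)) r) \<in> ?P"
      by (rule ideal_gen_prod[OF SAI[OF xI] diffN])
    show "r * x \<in> T" unfolding T_def using ideal_multl[OF II xI] ideal_add[OF PI 1 2] e by simp
  qed
  moreover have "lpoly ` tildeQ Q F l (Suc k) \<subseteq> T"
  proof
    fix g assume "g \<in> lpoly ` tildeQ Q F l (Suc k)"
    then obtain t where t: "t \<in> tildeQ Q F l (Suc k)" and gt: "g = lpoly t" by blast
    have "subst (tau k) g - subst (tau (Suc k)) g = lpoly (\<lambda>v. tau k t v - tau (Suc k) t v)"
      unfolding gt using subst_lpoly[OF linB] subst_lpoly[OF linA] by (simp add: lpoly_diff')
    also have "\<dots> = 0" unfolding tau_Suc comp_zero_tQ[OF KK t] extr_zero lpoly_zero' ..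
    finally show "g \<in> T" unfolding T_def using ideal_gen_sub[of "lpoly ` tildeQ Q F l (Suc k)"] \<open>g \<in> _\<close>
      by (auto simp: ideal_0[OF PI])
  qed
  ultimately have "?I \<subseteq> T" by (rule ideal_gen_least)
  then show ?thesis using h unfolding T_def by blast
qed

lemma ideal_Inter: "is_ideal (\<Inter>i\<in>A. ideal_gen (G i))"
  by (rule is_idealI) (auto intro: ideal_0 ideal_add ideal_multl ideal_gen_ideal)

lemma part3:
  fixes Q :: "nat \<Rightarrow> ('a::finite \<Rightarrow> 'k) set"
  assumes Qs: "\<forall>i\<in>{1..l}. lsubspace (Q i)"
  shows "(\<Inter>i\<in>{1..l}. ideal_gen (lpoly ` tildeQ Q F l i))
       = ideal_gen ((\<Inter>i\<in>{1..l}. ideal_gen (lpoly ` extl ` Q i))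
           \<union> (\<Union>i\<in>{1..l}. {f * g | f g. f \<in> lpoly ` tildeQ Q F l i \<and> g \<in> lpoly ` extr ` F i}))"
    (is "?L = ideal_gen ?G")
proof
  have genI: "lpoly ` tildeQ Q F l i \<subseteq> ideal_gen (lpoly ` tildeQ Q F l i)" for i
    by (rule ideal_gen_sub)
  show "ideal_gen ?G \<subseteq> ?L"
  proof (rule ideal_gen_least[OF ideal_Inter])
    show "?G \<subseteq> ?L"
    proof
      fix x assume "x \<in> ?G"
      then show "x \<in> ?L"
      proof
        assume x: "x \<in> (\<Inter>i\<in>{1..l}. ideal_gen (lpoly ` extl ` Q i))"
        show "x \<in> ?L"
        proof
          fix k assume k: "k \<in> {1..l}"
          have "extl ` Q k \<subseteq> tildeQ Q F l k" unfolding tildeQ_def by (rule order_trans[OF _ lspan_sup]) blast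
          then have "ideal_gen (lpoly ` extl ` Q k) \<subseteq> ideal_gen (lpoly ` tildeQ Q F l k)"
            by (intro ideal_gen_mono image_mono)
          then show "x \<in> ideal_gen (lpoly ` tildeQ Q F l k)" using x k by blast
        qed
      next
        assume "x \<in> (\<Union>i\<in>{1..l}. {f * g | f g. f \<in> lpoly ` tildeQ Q F l i \<and> g \<in> lpoly ` extr ` F i})"
        then obtain i f g where i: "i \<in> {1..l}" and f: "f \<in> lpoly ` tildeQ Q F l i"
          and g: "g \<in> lpoly ` extr ` F i" and x: "x = f * g" by blast
        show "x \<in> ?L"
        proof
          fix k assume k: "k \<in> {1..l}"
          show "x \<in> ideal_gen (lpoly ` tildeQ Q F l k)"
          proof (cases "k = i")
            case True
            then show ?thesis unfolding x using f genI[of i]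
              by (intro ideal_multr[OF ideal_gen_ideal]) blast
          next
            case False
            have "extr ` F i \<subseteq> tildeQ Q F l k"
              unfolding tildeQ_def by (rule order_trans[OF _ lspan_sup]) (use i False in blast)
            then have "g \<in> ideal_gen (lpoly ` tildeQ Q F l k)" using g genI[of k] by blast
            then show ?thesis unfolding x by (rule ideal_multl[OF ideal_gen_ideal])
          qed
        qed
      qed
    qed
  qed
next
  show "?L \<subseteq> ideal_gen ?G"
  proof
    fix f assume f: "f \<in> ?L"
    have RI: "is_ideal (ideal_gen ?G)" by (rule ideal_gen_ideal)
    have "k \<le> l \<Longrightarrow> f - subst (tau k) f \<in> ideal_gen ?G" for k
    proof (induction k)
      case 0
      have "(tau 0 :: ('a + 'b \<Rightarrow> 'k) \<Rightarrow> _) = (\<lambda>w. w)" by (simp add: fun_eq_iff tau_0)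
      then have "subst (tau 0) f = f" using subst_id by metis
      then show ?case using ideal_0[OF RI] by (simp only: diff_self)
    next
      case (Suc k)
      have fk: "f \<in> ideal_gen (lpoly ` tildeQ Q F l (Suc k))" using f Suc.prems by auto
      have "subst (tau k) f - subst (tau (Suc k)) f
        \<in> ideal_gen {f * g | f g. f \<in> lpoly ` tildeQ Q F l (Suc k) \<and> g \<in> lpoly ` extr ` F (Suc k)}"
        by (rule step[OF Suc.prems fk])
      also have "\<dots> \<subseteq> ideal_gen ?G"
      proof (rule ideal_gen_mono)
        have "Suc k \<in> {1..l}" using Suc.prems by simp
        then show "{f * g | f g. f \<in> lpoly ` tildeQ Q F l (Suc k) \<and> g \<in> lpoly ` extr ` F (Suc k)} \<subseteq> ?G"
          by blast
      qed
      finally have 2: "subst (tau k) f - subst (tau (Suc k)) f \<in> ideal_gen ?G" .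
      have 1: "f - subst (tau k) f \<in> ideal_gen ?G" using Suc by simp
      have "f - subst (tau (Suc k)) f = (f - subst (tau k) f) + (subst (tau k) f - subst (tau (Suc k)) f)"
        by simp
      then show ?case using ideal_add[OF RI 1 2] by simp
    qed
    then have a: "f - subst (tau l) f \<in> ideal_gen ?G" by simp
    have "subst (tau l) f \<in> ideal_gen (lpoly ` extl ` Q i)" if i: "i \<in> {1..l}" for i
    proof (rule subst_ideal[OF tau_lin[OF order_refl]])
      show "f \<in> ideal_gen (lpoly ` tildeQ Q F l i)" using f i by blast
      fix g assume "g \<in> tildeQ Q F l i"
      then show "tau l g \<in> extl ` Q i" using Qs i tau_l_img by blast
    qed
    then have "subst (tau l) f \<in> ?G" by blast
    then have b: "subst (tau l) f \<in> ideal_gen ?G" by (rule subsetD[OF ideal_gen_sub])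
    have "f = (f - subst (tau l) f) + subst (tau l) f" by simp
    then show "f \<in> ideal_gen ?G" using ideal_add[OF RI a b] by simp
  qed
qed

end

theorem mainTheorem6:
  fixes Q :: "nat \<Rightarrow> ('a::finite \<Rightarrow> 'k::field) set"
    and F :: "nat \<Rightarrow> ('b::finite \<Rightarrow> 'k) set"
    and l :: nat
  assumes "\<forall>i\<in>{1..l}. lsubspace (Q i)"
    and "linearly_joined (\<lambda>i. lin_space (Q i)) l"
    and "direct_sum_decomp F l"
  shows "linearly_joined (\<lambda>i. lin_space (tildeQ Q F l i)) l
    \<and> (\<forall>i\<in>{2..l}.
         lin_space (tildeQ Q F l i) \<inter> (\<Union>j\<in>{1..<i}. lin_space (tildeQ Q F l j))
       = lin_space (extl ` Q i \<union> range extr)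
           \<inter> (\<Union>j\<in>{1..<i}. lin_space (extl ` Q j \<union> range extr)))
    \<and> (\<Inter>i\<in>{1..l}. ideal_gen (lpoly ` tildeQ Q F l i))
       = ideal_gen ((\<Inter>i\<in>{1..l}. ideal_gen (lpoly ` extl ` Q i))
           \<union> (\<Union>i\<in>{1..l}. {f * g | f g. f \<in> lpoly ` tildeQ Q F l i \<and> g \<in> lpoly ` extr ` F i}))"
proof (intro conjI)
  show "linearly_joined (\<lambda>i. lin_space (tildeQ Q F l i)) l" by (rule part1[OF assms(2,3)])
  show "\<forall>i\<in>{2..l}.
         lin_space (tildeQ Q F l i) \<inter> (\<Union>j\<in>{1..<i}. lin_space (tildeQ Q F l j))
       = lin_space (extl ` Q i \<union> range extr)
           \<inter> (\<Union>j\<in>{1..<i}. lin_space (extl ` Q j \<union> range extr))"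
    by (intro ballI part2[OF assms(3)])
  show "(\<Inter>i\<in>{1..l}. ideal_gen (lpoly ` tildeQ Q F l i))
       = ideal_gen ((\<Inter>i\<in>{1..l}. ideal_gen (lpoly ` extl ` Q i))
           \<union> (\<Union>i\<in>{1..l}. {f * g | f g. f \<in> lpoly ` tildeQ Q F l i \<and> g \<in> lpoly ` extr ` F i}))"
    by (rule part3[OF assms(3,1)])
qed

end
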